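(* Let $u=u_1u_2\ldots u_n\in\mathbb{P}^*$ have an increasing/decreasing factorization. For $1\le i\le n-1$ let $s_i=u_{i+1}u_{i+2}\ldots u_n$ and $d_i=d_i(u)$, and let $s_n=\varepsilon$ (the empty word) and $d_n=0$. Then $$S(u;t,x)=\frac{t^{n}x^{\Sigma(u)}}{t^{n}x^{\Sigma(u)}+(1-x-tx)\sum_{i=1}^{n}t^{n-i}x^{d_i+\Sigma(s_i)}(1-x)^{i-1}}.$$
   Context: $\mathbb{P}$ is the set of positive integers with the usual order $\le$, and $\mathbb{P}^*$ is the set of all finite words (including the empty word $\varepsilon$) over $\mathbb{P}$. For $w=w_1\ldots w_n$, $|w|=n$ and $\Sigma(w)=\sum_{i=1}^n w_i$; the weight of $w$ is $\mathrm{wt}(w)=t^{|w|}x^{\Sigma(w)}$. For $u,w\in\mathbb{P}^*$, write $u\le w$ (generalized factor order) if there is a factor $v$ of $w$ (a string of $|u|$ consecutive letters of $w$) with $|v|=|u|$ such that the $i$-th letter of $v$ is $\ge$ the $i$-th letter of $u$ for all $i$; such a $v$ (with its position) is an embedding of $u$ into $w$. $\mathcal{S}(u)$ is the set of words $w$ with $u\le w$ such that the last $|u|$ letters of $w$ form the only embedding of $u$ into $w$, and $S(u;t,x)=\sum_{w\in\mathcal{S}(u)}\mathrm{wt}(w)$. A word $u=u_1\ldots u_n$ has an increasing/decreasing factorization if either $u_1\le\cdots\le u_n$, or there is $k<n$ with $u_1\le\cdots\le u_k>u_{k+1}\ge\cdots\ge u_n$. For $1\le i\le n-1$, $D^{(i)}(u)=\{n-i+j:1\le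 j\le i,\ u_j>u_{n-i+j}\}$ and $d_i(u)=\sum_{n-i+j\in D^{(i)}(u)}(u_j-u_{n-i+j})$. *)

theory Defs
  imports "HOL-Computational_Algebra.Formal_Power_Series"
begin

(* Words over the positive integers P are lists of naturals with all letters > 0.
   Letters are accessed 1-indexed via "letter". *)
definition pos_word :: "nat list \<Rightarrow> bool" where
  "pos_word w \<longleftrightarrow> (\<forall>a\<in>set w. 0 < a)"

definition letter :: "nat list \<Rightarrow> nat \<Rightarrow> nat" where
  "letter w p = w ! (p - 1)"

(* the factor of w starting at (0-indexed) position k is an embedding of u *)
definition embeds_at :: "nat list \<Rightarrow> nat list \<Rightarrow> nat \<Rightarrow> bool" where
  "embeds_at u w k \<longleftrightarrow> k + length u \<le> length w \<and> (\<forall>i<length u. u ! i \<le> w ! (k + i))"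

definition gfo_le :: "nat list \<Rightarrow> nat list \<Rightarrow> bool" where
  "gfo_le u w \<longleftrightarrow> (\<exists>k. embeds_at u w k)"

definition Sset :: "nat list \<Rightarrow> nat list set" where
  "Sset u = {w. pos_word w \<and> gfo_le u w \<and>
                 (\<forall>k. embeds_at u w k \<longrightarrow> k = length w - length u)}"

(* bivariate formal power series in t (outer variable) and x (inner variable) *)
definition tvar :: "real fps fps" where "tvar = fps_X"
definition xvar :: "real fps fps" where "xvar = fps_const fps_X"

definition S_gf :: "nat list \<Rightarrow> real fps fps" where
  "S_gf u = Abs_fps (\<lambda>m. Abs_fps (\<lambda>N.
      of_nat (card {w \<in> Sset u. length w = m \<and> sum_list w = N})))"

definition inc_dec_fact :: "nat list \<Rightarrow> bool" where
  "inc_dec_fact u \<longleftrightarrow> sorted u \<or>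
     (\<exists>k. 1 \<le> k \<and> k < length u \<and> sorted (take k u) \<and> u ! (k - 1) > u ! k \<and>
          sorted_wrt (\<ge>) (drop k u))"

definition Dset :: "nat \<Rightarrow> nat list \<Rightarrow> nat set" where
  "Dset i u = {length u - i + j | j. 1 \<le> j \<and> j \<le> i \<and> letter u j > letter u (length u - i + j)}"

definition dval :: "nat \<Rightarrow> nat list \<Rightarrow> nat" where
  "dval i u = (\<Sum>p\<in>Dset i u. letter u (p - (length u - i)) - letter u p)"

end

theory Submission
  imports Defs
begin

unbundle fps_syntax

definition gf :: "nat list set \<Rightarrow> real fps fps" where
  "gf W = Abs_fps (\<lambda>m. Abs_fps (\<lambda>N. of_nat (card {w\<in>W. length w = m \<and> sum_list w = N})))"

lemma gf_nth: "gf W $ m $ N = of_nat (card {w\<in>W. length w = m \<and> sum_list w = N})"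
  by (simp add: gf_def)

lemma fin_slice: fixes W :: "nat list set" shows "finite {w\<in>W. length w = m \<and> sum_list w = N}"
proof (rule finite_subset)
  show "{w\<in>W. length w = m \<and> sum_list w = N} \<subseteq> {xs. set xs \<subseteq> {..N::nat} \<and> length xs = m}"
    using member_le_sum_list by fastforce
  show "finite {xs. set xs \<subseteq> {..N::nat} \<and> length xs = m}"
    by (rule finite_lists_length_eq) simp
qed

lemma gf_union: "X \<inter> Y = {} \<Longrightarrow> gf (X \<union> Y) = gf X + gf Y"
proof (intro fps_ext)
  fix m N :: nat assume d: "X \<inter> Y = {}"
  have "{w\<in>X \<union> Y. length w = m \<and> sum_list w = N} =
     {w\<in>X. length w = m \<and> sum_list w = N} \<union> {w\<in>Y. length w = m \<and> sum_list w = N}" by auto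
  moreover have "card ({w\<in>X. length w = m \<and> sum_list w = N} \<union> {w\<in>Y. length w = m \<and> sum_list w = N})
     = card {w\<in>X. length w = m \<and> sum_list w = N} + card {w\<in>Y. length w = m \<and> sum_list w = N}"
    by (rule card_Un_disjoint) (use d fin_slice in auto)
  ultimately show "gf (X \<union> Y) $ m $ N = (gf X + gf Y) $ m $ N"
    by (simp add: gf_nth)
qed

lemma gf_UN:
  assumes "finite I" "\<And>i j. i \<in> I \<Longrightarrow> j \<in> I \<Longrightarrow> i \<noteq> j \<Longrightarrow> F i \<inter> F j = {}"
  shows "gf (\<Union>i\<in>I. F i) = (\<Sum>i\<in>I. gf (F i))"
proof (intro fps_ext)
  fix m N :: nat
  have "{w\<in>(\<Union>i\<in>I. F i). length w = m \<and> sum_list w = N} =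
     (\<Union>i\<in>I. {w\<in>F i. length w = m \<and> sum_list w = N})" by auto
  moreover have "card (\<Union>i\<in>I. {w\<in>F i. length w = m \<and> sum_list w = N})
      = (\<Sum>i\<in>I. card {w\<in>F i. length w = m \<and> sum_list w = N})"
    by (rule card_UN_disjoint) (use assms fin_slice in auto)
  ultimately show "gf (\<Union>i\<in>I. F i) $ m $ N = (\<Sum>i\<in>I. gf (F i)) $ m $ N"
    by (simp add: gf_nth fps_sum_nth)
qed

lemma gf_nil: "gf {[]} = 1"
proof (intro fps_ext)
  fix m N :: nat
  have "{w\<in>{[]}. length w = m \<and> sum_list w = N} = (if m = 0 \<and> N = 0 then {[]} else {})" by auto
  then show "gf {[]} $ m $ N = (1::real fps fps) $ m $ N"
    by (simp add: gf_nth)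
qed

lemma gf_append:
  assumes inj: "inj_on (\<lambda>(a,b). a @ b) (X \<times> Y)"
  shows "gf ((\<lambda>(a,b). a @ b) ` (X \<times> Y)) = gf X * gf Y"
proof (intro fps_ext)
  fix m N :: nat
  define XX where "XX i j = {a\<in>X. length a = i \<and> sum_list a = j}" for i j
  define YY where "YY i j = {a\<in>Y. length a = i \<and> sum_list a = j}" for i j
  define P where "P = {(a,b)\<in>X \<times> Y. length a + length b = m \<and> sum_list a + sum_list b = N}"
  have e1: "{w\<in>(\<lambda>(a,b). a @ b) ` (X \<times> Y). length w = m \<and> sum_list w = N} = (\<lambda>(a,b). a @ b) ` P"
    unfolding P_def by auto
  have c1: "card ((\<lambda>(a,b). a @ b) ` P) = card P"
    by (rule card_image, rule inj_on_subset[OF inj]) (auto simp: P_def)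
  have e2: "P = (\<Union>ij\<in>{..m} \<times> {..N}. XX (fst ij) (snd ij) \<times> YY (m - fst ij) (N - snd ij))"
    unfolding P_def XX_def YY_def by force
  have c2: "card P = (\<Sum>ij\<in>{..m} \<times> {..N}. card (XX (fst ij) (snd ij)) * card (YY (m - fst ij) (N - snd ij)))"
    unfolding e2
    apply (subst card_UN_disjoint)
    apply (auto simp: XX_def YY_def fin_slice card_cartesian_product)
    done
  have "(gf X * gf Y) $ m $ N = (\<Sum>i=0..m. \<Sum>j=0..N. gf X $ i $ j * gf Y $ (m-i) $ (N-j))"
    by (simp add: fps_mult_nth fps_sum_nth)
  also have "\<dots> = (\<Sum>i\<in>{..m}. \<Sum>j\<in>{..N}. of_nat (card (XX i j) * card (YY (m - i) (N - j))))"
    by (simp add: gf_nth XX_def YY_def atLeast0AtMost)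
  also have "\<dots> = of_nat (card P)"
    unfolding c2 by (simp add: sum.cartesian_product split_beta)
  finally show "gf ((\<lambda>(a,b). a @ b) ` (X \<times> Y)) $ m $ N = (gf X * gf Y) $ m $ N"
    by (simp add: gf_nth e1 c1)
qed

lemma gf_shift:
  assumes bij: "bij_betw f X Y"
    and w: "\<And>w. w \<in> X \<Longrightarrow> length (f w) = length w \<and> sum_list (f w) = sum_list w + D"
  shows "gf Y = xvar ^ D * gf X"
proof (intro fps_ext)
  fix m N :: nat
  have rhs: "(xvar ^ D * gf X) $ m $ N = (if N < D then 0 else gf X $ m $ (N - D))"
    by (simp add: xvar_def fps_X_power_mult_nth)
  have img: "{w\<in>Y. length w = m \<and> sum_list w = N} = f ` {w\<in>X. length w = m \<and> sum_list w + D = N}"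
    using bij w unfolding bij_betw_def by force
  have "card {w\<in>Y. length w = m \<and> sum_list w = N} = card {w\<in>X. length w = m \<and> sum_list w + D = N}"
    unfolding img by (rule card_image, rule inj_on_subset[OF bij_betw_imp_inj_on[OF bij]]) auto
  moreover have "{w\<in>X. length w = m \<and> sum_list w + D = N} =
     (if N < D then {} else {w\<in>X. length w = m \<and> sum_list w = N - D})" by auto
  ultimately show "gf Y $ m $ N = (xvar ^ D * gf X) $ m $ N"
    by (simp add: rhs gf_nth)
qed


definition domw :: "nat list \<Rightarrow> nat list set" where
  "domw v = {w. length w = length v \<and> (\<forall>i<length v. v!i \<le> w!i)}"

lemma domw_Nil: "domw [] = {[]}"
  by (auto simp: domw_def)

lemma domw_Cons: "domw (c#v) = (\<lambda>(a,b). a @ b) ` (domw [c] \<times> domw v)"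
proof
  show "domw (c#v) \<subseteq> (\<lambda>(a,b). a @ b) ` (domw [c] \<times> domw v)"
  proof
    fix w assume w: "w \<in> domw (c#v)"
    then obtain x w' where wx: "w = x # w'" by (cases w) (auto simp: domw_def)
    have "[x] \<in> domw [c]" using w wx by (auto simp: domw_def)
    moreover have "w' \<in> domw v" using w wx by (fastforce simp: domw_def)
    ultimately show "w \<in> (\<lambda>(a,b). a @ b) ` (domw [c] \<times> domw v)"
      using wx by (auto intro!: image_eqI[where x="([x],w')"])
  qed
  show "(\<lambda>(a,b). a @ b) ` (domw [c] \<times> domw v) \<subseteq> domw (c#v)"
  proof clarify
    fix a b assume a: "a \<in> domw [c]" and b: "b \<in> domw v"
    then obtain x where ax: "a = [x]" "c \<le> x"
      by (cases a) (auto simp: domw_def)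
    show "a @ b \<in> domw (c#v)"
      using b ax by (auto simp: domw_def nth_Cons split: nat.splits)
  qed
qed

lemma inj_append_len:
  assumes "\<And>a. a \<in> X \<Longrightarrow> length a = k"
  shows "inj_on (\<lambda>(a,b). a @ b) (X \<times> Y)"
  using assms by (auto simp: inj_on_def append_eq_append_conv)

lemma inj_append_len2:
  assumes "\<And>b. b \<in> Y \<Longrightarrow> length b = k"
  shows "inj_on (\<lambda>(a,b). a @ b) (X \<times> Y)"
  using assms unfolding inj_on_def by clarify (metis append_eq_append_conv)

lemma gf_domw1: "gf (domw [c]) * (1 - xvar) = tvar * xvar ^ c"
proof -
  define gc :: "real fps" where "gc = Abs_fps (\<lambda>N. if c \<le> N then 1 else 0)"
  have g1: "gf (domw [c]) = tvar * fps_const gc"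
  proof (intro fps_ext)
    fix m N :: nat
    have "{w\<in>domw [c]. length w = m \<and> sum_list w = N} = (if m = 1 \<and> c \<le> N then {[N]} else {})"
      by (auto simp: domw_def length_Suc_conv)
    then show "gf (domw [c]) $ m $ N = (tvar * fps_const gc) $ m $ N"
      by (simp add: gf_nth tvar_def gc_def)
  qed
  have g2: "gc * (1 - fps_X) = fps_X ^ c"
  proof (intro fps_ext)
    fix N :: nat
    have "(gc * fps_X) $ N = (fps_X * gc) $ N" by (simp add: mult.commute)
    then show "(gc * (1 - fps_X)) $ N = (fps_X ^ c :: real fps) $ N"
      by (simp add: right_diff_distrib gc_def; cases c; auto)
  qed
  have "gf (domw [c]) * (1 - xvar) = tvar * fps_const (gc * (1 - fps_X))"
    by (simp add: g1 xvar_def mult.assoc flip: fps_const_1_eq_1)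
  also have "\<dots> = tvar * xvar ^ c" by (simp add: g2 xvar_def)
  finally show ?thesis .
qed

lemma gf_domw: "gf (domw v) * (1 - xvar) ^ length v = tvar ^ length v * xvar ^ sum_list v"
proof (induction v)
  case Nil
  then show ?case by (simp add: domw_Nil gf_nil)
next
  case (Cons c v)
  have "gf (domw (c#v)) = gf (domw [c]) * gf (domw v)"
    unfolding domw_Cons[of c v] by (rule gf_append, rule inj_append_len[where k=1]) (auto simp: domw_def)
  then have "gf (domw (c#v)) * (1 - xvar) ^ length (c#v)
     = (gf (domw [c]) * (1 - xvar)) * (gf (domw v) * (1 - xvar) ^ length v)"
    by (simp add: algebra_simps)
  also have "\<dots> = tvar ^ length (c#v) * xvar ^ sum_list (c#v)"
    unfolding Cons.IH gf_domw1 by (simp add: power_add mult_ac)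
  finally show ?case .
qed


lemma incdec_tail:
  assumes "inc_dec_fact u" "j < q" "q \<le> r" "r < length u" "u!q < u!j"
  shows "u!r \<le> u!q"
proof -
  from assms(1) consider "sorted u" | k where "1 \<le> k" "k < length u" "sorted (take k u)"
      "sorted_wrt (\<ge>) (drop k u)"
    unfolding inc_dec_fact_def by blast
  then show ?thesis
  proof cases
    case 1
    then have "u!j \<le> u!q" using assms by (simp add: sorted_nth_mono)
    then show ?thesis using assms by simp
  next
    case 2
    show ?thesis
    proof (cases "q < k")
      case True
      then have "take k u ! j \<le> take k u ! q"
        using 2 assms by (intro sorted_nth_mono) auto
      then have "u!j \<le> u!q" using True assms by simp
      then show ?thesis using assms by simp
    next
      case False
      show ?thesis
      proof (cases "q = r")
        case True then show ?thesis by simp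
      next
        case ne: False
        have "drop k u ! (q - k) \<ge> drop k u ! (r - k)"
          using 2 assms False ne by (intro sorted_wrt_nth_less[where P="(\<ge>)", OF 2(4)]) auto
        then show ?thesis using False assms by simp
      qed
    qed
  qed
qed

lemma emb_append_prefix:
  "k + length u \<le> length a \<Longrightarrow> embeds_at u (a @ b) k = embeds_at u a k"
  unfolding embeds_at_def by (auto simp: nth_append)

lemma emb_take:
  "embeds_at u (take m w) k \<longleftrightarrow> (k + length u \<le> m \<and> embeds_at u w k)"
  unfolding embeds_at_def by auto

lemma Sset_len: "p \<in> Sset u \<Longrightarrow> length u \<le> length p"
  unfolding Sset_def gfo_le_def embeds_at_def by auto

lemma Sset_emb_end: "p \<in> Sset u \<Longrightarrow> q < length u \<Longrightarrow> u!q \<le> p!(length p - length u + q)"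
proof -
  assume p: "p \<in> Sset u" and q: "q < length u"
  then obtain k where k: "embeds_at u p k" unfolding Sset_def gfo_le_def by auto
  then have "k = length p - length u" using p unfolding Sset_def by auto
  then show ?thesis using k q unfolding embeds_at_def by auto
qed

lemma Sset_least:
  assumes "p \<in> Sset u"
  shows "(LEAST k. embeds_at u (p @ r) k) = length p - length u"
proof (rule Least_equality)
  have l: "length u \<le> length p" using Sset_len[OF assms] .
  obtain k where k: "embeds_at u p k" using assms unfolding Sset_def gfo_le_def by auto
  then have "k = length p - length u" using assms unfolding Sset_def by auto
  then show "embeds_at u (p @ r) (length p - length u)"
    using k l by (subst emb_append_prefix) auto
  fix y assume y: "embeds_at u (p @ r) y"
  show "length p - length u \<le> y"
  proof (rule ccontr)
    assume "\<not> length p - length u \<le> y"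
    then have "embeds_at u p y" using y l by (subst (asm) emb_append_prefix) auto
    then have "y = length p - length u" using assms unfolding Sset_def by auto
    with \<open>\<not> length p - length u \<le> y\<close> show False by simp
  qed
qed

definition Aset :: "nat list \<Rightarrow> nat list set" where
  "Aset u = {w. pos_word w \<and> \<not> gfo_le u w}"

definition Tset :: "nat list \<Rightarrow> nat \<Rightarrow> nat list set" where
  "Tset u i = {p \<in> Sset u. \<forall>j<i. u!j \<le> p!(length p - i + j)}"

lemma nil_Aset: "u \<noteq> [] \<Longrightarrow> [] \<in> Aset u"
  by (auto simp: Aset_def pos_word_def gfo_le_def embeds_at_def)

lemma A_S_disj: "Aset u \<inter> Sset u = {}"
  by (auto simp: Aset_def Sset_def)

lemma F1_set:
  assumes "u \<noteq> []"
  shows "(\<lambda>(a,b). a @ b) ` (Aset u \<times> domw [1]) = (Aset u - {[]}) \<union> Sset u"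
proof
  show "(\<lambda>(a,b). a @ b) ` (Aset u \<times> domw [1]) \<subseteq> (Aset u - {[]}) \<union> Sset u"
  proof clarify
    fix a b assume a: "a \<in> Aset u" and b: "b \<in> domw [1]" and nS: "a @ b \<notin> Sset u"
    obtain x where bx: "b = [x]" "1 \<le> x" using b by (cases b) (auto simp: domw_def)
    have pos: "pos_word (a @ b)" using a bx by (auto simp: Aset_def pos_word_def)
    have "\<not> gfo_le u (a @ b)"
    proof
      assume "gfo_le u (a @ b)"
      have "\<forall>k. embeds_at u (a @ b) k \<longrightarrow> k = length (a @ b) - length u"
      proof (intro allI impI)
        fix k assume k: "embeds_at u (a @ b) k"
        show "k = length (a @ b) - length u"
        proof (rule ccontr)
          assume ne: "k \<noteq> length (a @ b) - length u"
          have "k + length u \<le> length (a @ b)" using k by (simp add: embeds_at_def)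
          then have "k + length u \<le> length a" using ne bx by auto
          then have "embeds_at u a k" using k by (simp add: emb_append_prefix)
          then show False using a by (auto simp: Aset_def gfo_le_def)
        qed
      qed
      then have "a @ b \<in> Sset u" using pos \<open>gfo_le u (a @ b)\<close> by (simp add: Sset_def)
      then show False using nS by simp
    qed
    then show "a @ b \<in> Aset u - {[]}" using pos bx by (auto simp: Aset_def)
  qed
  show "(Aset u - {[]}) \<union> Sset u \<subseteq> (\<lambda>(a,b). a @ b) ` (Aset u \<times> domw [1])"
  proof
    fix w assume w: "w \<in> (Aset u - {[]}) \<union> Sset u"
    have wne: "w \<noteq> []" using w assms Sset_len[of w u] by auto
    have pw: "pos_word w" using w by (auto simp: Aset_def Sset_def)
    have eq: "w = butlast w @ [last w]" using wne by simp
    have "[last w] \<in> domw [1]"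
      using pw wne last_in_set[OF wne] by (auto simp: domw_def pos_word_def Suc_le_eq)
    moreover have "butlast w \<in> Aset u"
    proof -
      have "pos_word (butlast w)" using pw by (auto simp: pos_word_def dest: in_set_butlastD)
      moreover have "\<not> gfo_le u (butlast w)"
      proof
        assume "gfo_le u (butlast w)"
        then obtain k where k: "embeds_at u (butlast w) k" by (auto simp: gfo_le_def)
        have kl: "k + length u \<le> length w - 1" using k by (simp add: embeds_at_def)
        have kw: "embeds_at u w k" using k eq emb_append_prefix[of k u "butlast w" "[last w]"] kl
          by simp
        show False
        proof (cases "w \<in> Sset u")
          case True
          then have "k = length w - length u" using kw by (auto simp: Sset_def)
          then show False using kl assms wne by (cases u) auto
        next
          case False
          then have "w \<in> Aset u" using w by auto
          then show False using kw by (auto simp: Aset_def gfo_le_def)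
        qed
      qed
      ultimately show ?thesis by (simp add: Aset_def)
    qed
    ultimately show "w \<in> (\<lambda>(a,b). a @ b) ` (Aset u \<times> domw [1])"
      by (intro image_eqI[where x="(butlast w, [last w])"]) (use eq in auto)
  qed
qed


lemma F2_sub:
  assumes "a \<in> Aset u" "v \<in> domw u" and pu: "pos_word u"
  shows "a @ v \<in> (\<Union>i\<in>{1..length u}. (\<lambda>(a,b). a @ b) ` (Tset u i \<times> domw (drop i u)))"
proof -
  let ?n = "length u" and ?w = "a @ v"
  have lv: "length v = ?n" using assms by (simp add: domw_def)
  have ea: "embeds_at u ?w (length a)"
    using assms lv by (auto simp: embeds_at_def domw_def nth_append)
  define k0 where "k0 = (LEAST k. embeds_at u ?w k)"
  have ek0: "embeds_at u ?w k0" unfolding k0_def by (rule LeastI[of "\<lambda>k. embeds_at u ?w k", OF ea])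
  have k0le: "k0 \<le> length a" unfolding k0_def by (rule Least_le[of "\<lambda>k. embeds_at u ?w k", OF ea])
  have k0gt: "length a < k0 + ?n"
  proof (rule ccontr)
    assume "\<not> length a < k0 + ?n"
    then have "embeds_at u a k0" using ek0 by (simp add: emb_append_prefix)
    then show False using assms by (auto simp: Aset_def gfo_le_def)
  qed
  define i where "i = k0 + ?n - length a"
  have i1: "1 \<le> i" "i \<le> ?n" using k0gt k0le by (auto simp: i_def)
  define p where "p = take (k0 + ?n) ?w"
  define r where "r = drop (k0 + ?n) ?w"
  have wpr: "?w = p @ r" unfolding p_def r_def by (rule append_take_drop_id[symmetric])
  have lp: "length p = k0 + ?n" using k0le lv by (simp add: p_def)
  have posw: "pos_word ?w" using assms
    by (auto simp: Aset_def domw_def pos_word_def in_set_conv_nth) (metis nth_mem order_less_le_trans)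
  have pS: "p \<in> Sset u"
  proof -
    have "pos_word p" using posw by (auto simp: p_def pos_word_def dest: in_set_takeD)
    moreover have "embeds_at u p k0" unfolding p_def emb_take using ek0 by simp
    moreover have "\<forall>k. embeds_at u p k \<longrightarrow> k = length p - ?n"
    proof (intro allI impI)
      fix k assume "embeds_at u p k"
      then have "k + ?n \<le> k0 + ?n" "embeds_at u ?w k" unfolding p_def emb_take by auto
      moreover then have "k0 \<le> k" unfolding k0_def by (simp add: Least_le)
      ultimately show "k = length p - ?n" using lp by simp
    qed
    ultimately show ?thesis by (auto simp: Sset_def gfo_le_def)
  qed
  have pT: "p \<in> Tset u i"
  proof -
    have "u!j \<le> p!(length p - i + j)" if j: "j < i" for j
    proof -
      have e: "length p - i + j = length a + j" using lp i1 k0gt by (simp add: i_def)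
      have "p!(length a + j) = v!j" using j i1 lp k0gt
        by (simp add: p_def nth_append i_def)
      moreover have "u!j \<le> v!j" using assms j i1 by (auto simp: domw_def)
      ultimately show ?thesis using e by simp
    qed
    then show ?thesis using pS by (simp add: Tset_def)
  qed
  have rD: "r \<in> domw (drop i u)"
  proof -
    have lr: "length r = ?n - i" using lv k0le k0gt by (simp add: r_def i_def)
    have "(drop i u)!j \<le> r!j" if j: "j < ?n - i" for j
    proof -
      have "r!j = v!(i + j)" using j k0le k0gt lv
        by (simp add: r_def nth_append i_def add.commute add.left_commute)
      moreover have "u!(i+j) \<le> v!(i+j)" using assms j i1 by (auto simp: domw_def)
      ultimately show ?thesis using i1 by simp
    qed
    then show ?thesis using lr by (simp add: domw_def)
  qed
  show ?thesis using i1 pT rD wpr by (auto intro!: bexI[where x=i] image_eqI[where x="(p,r)"])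
qed

lemma F2_sup:
  assumes i: "1 \<le> i" "i \<le> length u" and p: "p \<in> Tset u i" and r: "r \<in> domw (drop i u)"
  shows "p @ r \<in> (\<lambda>(a,b). a @ b) ` (Aset u \<times> domw u)"
proof -
  let ?n = "length u"
  have pS: "p \<in> Sset u" using p by (simp add: Tset_def)
  have lp: "?n \<le> length p" by (rule Sset_len[OF pS])
  define a where "a = take (length p - i) p"
  define v where "v = drop (length p - i) p @ r"
  have eq: "p @ r = a @ v" by (simp add: a_def v_def)
  have aA: "a \<in> Aset u"
  proof -
    have "pos_word a" using pS by (auto simp: a_def Sset_def pos_word_def dest: in_set_takeD)
    moreover have "\<not> gfo_le u a"
    proof
      assume "gfo_le u a"
      then obtain k where "embeds_at u a k" by (auto simp: gfo_le_def)
      then have "k + ?n \<le> length p - i" "embeds_at u p k" unfolding a_def emb_take by auto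
      moreover then have "k = length p - ?n" using pS by (auto simp: Sset_def)
      ultimately show False using i lp by simp
    qed
    ultimately show ?thesis by (simp add: Aset_def)
  qed
  have vD: "v \<in> domw u"
  proof -
    have lr: "length r = ?n - i" using r by (simp add: domw_def)
    have lv: "length v = ?n" using lr i lp by (simp add: v_def)
    have "u!q \<le> v!q" if q: "q < ?n" for q
    proof (cases "q < i")
      case True
      then have "v!q = p!(length p - i + q)" using i lp by (simp add: v_def nth_append)
      then show ?thesis using p True by (simp add: Tset_def)
    next
      case False
      then have "v!q = r!(q - i)" using i lp by (simp add: v_def nth_append)
      moreover have "\<forall>ia<length u - i. u!(i+ia) \<le> r!ia" using r by (simp add: domw_def)
      ultimately show ?thesis using False q by (auto dest: spec[of _ "q-i"])
    qed
    then show ?thesis using lv by (simp add: domw_def)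
  qed
  show ?thesis using eq aA vD by (auto intro!: image_eqI[where x="(a,v)"])
qed

lemma F2_set: assumes "pos_word u" shows
  "(\<lambda>(a,b). a @ b) ` (Aset u \<times> domw u) =
   (\<Union>i\<in>{1..length u}. (\<lambda>(a,b). a @ b) ` (Tset u i \<times> domw (drop i u)))"
  using F2_sub[OF _ _ assms] F2_sup by fastforce

lemma F2_disj:
  assumes "i \<in> {1..length u}" "i' \<in> {1..length u}" "i \<noteq> i'"
  shows "(\<lambda>(a,b). a @ b) ` (Tset u i \<times> domw (drop i u)) \<inter>
         (\<lambda>(a,b). a @ b) ` (Tset u i' \<times> domw (drop i' u)) = {}"
proof (rule ccontr)
  assume "\<not> ?thesis"
  then obtain p r p' r' where p: "p \<in> Tset u i" "r \<in> domw (drop i u)"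
    and p': "p' \<in> Tset u i'" "r' \<in> domw (drop i' u)" and eq: "p @ r = p' @ r'"
    by force
  have pS: "p \<in> Sset u" "p' \<in> Sset u" using p p' by (auto simp: Tset_def)
  have "length p - length u = length p' - length u"
    using Sset_least[OF pS(1), of r] Sset_least[OF pS(2), of r'] eq by simp
  then have "length p = length p'" using Sset_len[OF pS(1)] Sset_len[OF pS(2)] by simp
  moreover have "length r = length u - i" "length r' = length u - i'"
    using p p' by (auto simp: domw_def)
  moreover have "length (p @ r) = length (p' @ r')" using eq by simp
  ultimately show False using assms by auto
qed


definition incr :: "nat list \<Rightarrow> nat \<Rightarrow> nat \<Rightarrow> nat \<Rightarrow> nat" where
  "incr u i m k = (if m - i \<le> k then u!(k-(m-i)) - u!(k-(m-length u)) else 0)"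

definition shiftw :: "nat list \<Rightarrow> nat \<Rightarrow> nat list \<Rightarrow> nat list" where
  "shiftw u i p = map (\<lambda>k. p!k + incr u i (length p) k) [0..<length p]"

definition unshiftw :: "nat list \<Rightarrow> nat \<Rightarrow> nat list \<Rightarrow> nat list" where
  "unshiftw u i p = map (\<lambda>k. p!k - incr u i (length p) k) [0..<length p]"

definition Dsum :: "nat list \<Rightarrow> nat \<Rightarrow> nat" where
  "Dsum u i = (\<Sum>j<i. u!j - u!(length u - i + j))"

lemma nat_sub_helper: "(a::nat) \<le> P \<Longrightarrow> b \<le> P \<Longrightarrow> b \<le> P - (a - b)"
  by arith

lemma nat_add_helper: "(b::nat) \<le> P \<Longrightarrow> a \<le> P + (a - b)"
  by arith

lemma shiftw_len[simp]: "length (shiftw u i p) = length p"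
  by (simp add: shiftw_def)
lemma unshiftw_len[simp]: "length (unshiftw u i p) = length p"
  by (simp add: unshiftw_def)
lemma shiftw_nth: "k < length p \<Longrightarrow> shiftw u i p ! k = p!k + incr u i (length p) k"
  by (simp add: shiftw_def)
lemma unshiftw_nth: "k < length p \<Longrightarrow> unshiftw u i p ! k = p!k - incr u i (length p) k"
  by (simp add: unshiftw_def)

lemma unshift_shift: "unshiftw u i (shiftw u i p) = p"
  by (rule nth_equalityI) (auto simp: unshiftw_nth shiftw_nth)

lemma pos_word_nth: "pos_word w \<Longrightarrow> k < length w \<Longrightarrow> 0 < w!k"
  by (simp add: pos_word_def)

lemma pos_word_iff: "pos_word w \<longleftrightarrow> (\<forall>k<length w. 0 < w!k)"
  by (auto simp: pos_word_def in_set_conv_nth)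

lemma shift_in:
  assumes pu: "pos_word u" and idf: "inc_dec_fact u" and i: "1 \<le> i" "i \<le> length u"
    and p: "p \<in> Sset u"
  shows "shiftw u i p \<in> Tset u i"
proof -
  let ?n = "length u" and ?m = "length p" and ?p' = "shiftw u i p"
  have mn: "?n \<le> ?m" using Sset_len[OF p] .
  have ge: "p!k \<le> ?p'!k" if "k < ?m" for k using that by (simp add: shiftw_nth)
  have pos: "pos_word ?p'"
    using p ge unfolding pos_word_iff Sset_def by (auto intro: order_less_le_trans)
  have eend: "embeds_at u ?p' (?m - ?n)"
    unfolding embeds_at_def
  proof (intro conjI allI impI)
    show "?m - ?n + ?n \<le> length ?p'" using mn by simp
    fix r assume r: "r < ?n"
    have "u!r \<le> p!(?m-?n+r)" by (rule Sset_emb_end[OF p r])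
    moreover have "p!(?m-?n+r) \<le> ?p'!(?m-?n+r)" by (rule ge) (use r mn in simp)
    ultimately show "u!r \<le> ?p'!(?m-?n+r)" by simp
  qed
  have uniq: "k = ?m - ?n" if k: "embeds_at u ?p' k" for k
  proof (rule ccontr)
    assume ne: "k \<noteq> ?m - ?n"
    have kl: "k + ?n \<le> ?m" using k by (simp add: embeds_at_def)
    then have kl2: "k < ?m - ?n" using ne by simp
    have "embeds_at u p k"
      unfolding embeds_at_def
    proof (intro conjI allI impI)
      show "k + ?n \<le> ?m" by (rule kl)
      fix r assume r: "r < ?n"
      let ?P = "k + r"
      have Pm: "?P < ?m" using r kl by simp
      have ur: "u!r \<le> ?p'!?P" using k r by (simp add: embeds_at_def)
      show "u!r \<le> p!?P"
      proof (cases "incr u i ?m ?P = 0")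
        case True
        then show ?thesis using ur Pm by (simp add: shiftw_nth)
      next
        case False
        define j where "j = ?P - (?m - i)"
        define q where "q = ?P - (?m - ?n)"
        have c1: "?m - i \<le> ?P" and c2: "u!q < u!j"
          using False by (auto simp: incr_def j_def q_def split: if_splits)
        have qn: "q < ?n" unfolding q_def using Pm mn r by arith
        have jq: "j < q"
        proof -
          have "j \<le> q" using c1 i mn by (simp add: j_def q_def)
          moreover have "j \<noteq> q" using c2 by auto
          ultimately show ?thesis by simp
        qed
        have qr: "q \<le> r" using kl2 by (simp add: q_def)
        have "u!r \<le> u!q" by (rule incdec_tail[OF idf jq qr r c2])
        moreover have "u!q \<le> p!(?m - ?n + q)" by (rule Sset_emb_end[OF p qn])
        moreover have "?m - ?n + q = ?P" using c1 i mn by (simp add: q_def)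
        ultimately show ?thesis by simp
      qed
    qed
    then have "k = ?m - ?n" using p by (auto simp: Sset_def)
    then show False using ne by simp
  qed
  have inS: "?p' \<in> Sset u"
    using pos eend uniq by (auto simp: Sset_def gfo_le_def)
  have "u!j \<le> ?p'!(?m - i + j)" if j: "j < i" for j
  proof -
    have idx: "?m - i + j < ?m" using j i mn by simp
    have e1: "?p'!(?m - i + j) = p!(?m - i + j) + (u!j - u!(?n - i + j))"
      using idx i mn by (simp add: shiftw_nth incr_def ac_simps)
    have "u!(?n - i + j) \<le> p!(?m - ?n + (?n - i + j))"
      by (rule Sset_emb_end[OF p]) (use j i in simp)
    moreover have "?m - ?n + (?n - i + j) = ?m - i + j" using i mn j by simp
    ultimately show ?thesis using e1 nat_add_helper by metis
  qed
  then show ?thesis using inS by (simp add: Tset_def)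
qed

lemma unshift_props:
  assumes pu: "pos_word u" and i: "1 \<le> i" "i \<le> length u"
    and p: "p \<in> Tset u i"
  shows "unshiftw u i p \<in> Sset u" "shiftw u i (unshiftw u i p) = p"
proof -
  let ?n = "length u" and ?m = "length p" and ?q = "unshiftw u i p"
  have pS: "p \<in> Sset u" using p by (simp add: Tset_def)
  have mn: "?n \<le> ?m" using Sset_len[OF pS] .
  have incle: "incr u i ?m k \<le> p!k" if k: "k < ?m" for k
  proof (cases "?m - i \<le> k")
    case True
    define j where "j = k - (?m - i)"
    have "j < i" using True k i by (simp add: j_def)
    then have "u!j \<le> p!(?m - i + j)" using p by (simp add: Tset_def)
    moreover have "?m - i + j = k" using True by (simp add: j_def)
    ultimately show ?thesis using True by (simp add: incr_def j_def)
  next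
    case False then show ?thesis by (simp add: incr_def)
  qed
  show "shiftw u i ?q = p"
    by (rule nth_equalityI) (auto simp: unshiftw_nth shiftw_nth incle)
  have le: "?q!k \<le> p!k" if "k < ?m" for k using that by (simp add: unshiftw_nth)
  have tail: "u!(k - (?m - ?n)) \<le> ?q!k" if k: "k < ?m" "?m - ?n \<le> k" for k
  proof -
    have e: "?m - ?n + (k - (?m - ?n)) = k" using k by simp
    have a1: "u!(k - (?m - ?n)) \<le> p!k"
      using Sset_emb_end[OF pS, of "k - (?m - ?n)"] k mn e by simp
    show ?thesis
    proof (cases "?m - i \<le> k")
      case True
      define j where "j = k - (?m - i)"
      have "j < i" using True k i by (simp add: j_def)
      then have "u!j \<le> p!(?m - i + j)" using p by (simp add: Tset_def)
      moreover have "?m - i + j = k" using True by (simp add: j_def)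
      ultimately have "u!j \<le> p!k" by simp
      moreover have "?q!k = p!k - (u!j - u!(k - (?m - ?n)))"
        using True k by (simp add: unshiftw_nth incr_def j_def)
      ultimately show ?thesis using a1 nat_sub_helper by metis
    next
      case False
      then show ?thesis using a1 k by (simp add: unshiftw_nth incr_def)
    qed
  qed
  have pos: "pos_word ?q"
    unfolding pos_word_iff
  proof (intro allI impI)
    fix k assume k: "k < length ?q"
    show "0 < ?q!k"
    proof (cases "?m - i \<le> k")
      case True
      then have "?m - ?n \<le> k" using i by simp
      then have "u!(k - (?m - ?n)) \<le> ?q!k" using tail k by simp
      moreover have "0 < u!(k - (?m - ?n))" by (rule pos_word_nth[OF pu]) (use k mn i unshiftw_len[of u i p] in arith)
      ultimately show ?thesis by simp
    next
      case False
      then have "?q!k = p!k" using k by (simp add: unshiftw_nth incr_def)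
      then show ?thesis using pS k by (auto simp: Sset_def pos_word_iff)
    qed
  qed
  have eend: "embeds_at u ?q (?m - ?n)"
    unfolding embeds_at_def
  proof (intro conjI allI impI)
    show "?m - ?n + ?n \<le> length ?q" using mn by simp
    fix r assume r: "r < ?n"
    show "u!r \<le> ?q!(?m - ?n + r)" using tail[of "?m - ?n + r"] r mn by simp
  qed
  have uniq: "\<forall>k. embeds_at u ?q k \<longrightarrow> k = length ?q - ?n"
  proof (intro allI impI)
    fix k assume "embeds_at u ?q k"
    then have "embeds_at u p k" using le unfolding embeds_at_def by (auto intro: order_trans)
    then show "k = length ?q - ?n" using pS by (auto simp: Sset_def)
  qed
  show "?q \<in> Sset u" using pos eend uniq by (auto simp: Sset_def gfo_le_def)
qed

lemma shift_bij:
  assumes pu: "pos_word u" and idf: "inc_dec_fact u" and i: "1 \<le> i" "i \<le> length u"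
  shows "bij_betw (shiftw u i) (Sset u) (Tset u i)"
  by (rule bij_betw_byWitness[where f'="unshiftw u i"])
     (use shift_in[OF assms] unshift_props[OF pu i] unshift_shift in auto)

lemma shift_sum:
  assumes i: "i \<le> length u" and p: "p \<in> Sset u"
  shows "sum_list (shiftw u i p) = sum_list p + Dsum u i"
proof -
  let ?n = "length u" and ?m = "length p"
  have mn: "?n \<le> ?m" using Sset_len[OF p] .
  have "sum_list (shiftw u i p) = (\<Sum>k=0..<?m. p!k + incr u i ?m k)"
    by (simp add: shiftw_def interv_sum_list_conv_sum_set_nat)
  also have "\<dots> = sum_list p + (\<Sum>k=0..<?m. incr u i ?m k)"
    by (simp add: sum.distrib sum_list_sum_nth)
  also have "(\<Sum>k=0..<?m. incr u i ?m k) = (\<Sum>k=?m-i..<?m. incr u i ?m k)"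
  proof -
    have "{0..<?m} = {0..<?m-i} \<union> {?m-i..<?m}" by auto
    then have "(\<Sum>k=0..<?m. incr u i ?m k) = (\<Sum>k=0..<?m-i. incr u i ?m k) + (\<Sum>k=?m-i..<?m. incr u i ?m k)"
      by (simp add: sum.union_disjoint[symmetric] ivl_disj_int)
    moreover have "(\<Sum>k=0..<?m-i. incr u i ?m k) = 0" by (simp add: incr_def)
    ultimately show ?thesis by simp
  qed
  also have "\<dots> = (\<Sum>j=0..<i. incr u i ?m (j + (?m - i)))"
    using sum.shift_bounds_nat_ivl[of "incr u i ?m" 0 "?m - i" i] i mn by simp
  also have "\<dots> = Dsum u i"
    unfolding Dsum_def lessThan_atLeast0
    by (rule sum.cong) (use i mn in \<open>auto simp: incr_def ac_simps\<close>)
  finally show ?thesis .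
qed


lemma dval_Dsum:
  assumes i: "i \<le> length u"
  shows "dval i u = Dsum u i"
proof -
  let ?n = "length u"
  define J where "J = {j\<in>{1..i}. letter u j > letter u (?n - i + j)}"
  have D: "Dset i u = (\<lambda>j. ?n - i + j) ` J" by (auto simp: Dset_def J_def)
  have "dval i u = (\<Sum>j\<in>J. letter u (?n - i + j - (?n - i)) - letter u (?n - i + j))"
    unfolding dval_def D by (subst sum.reindex) (auto simp: inj_on_def)
  also have "\<dots> = (\<Sum>j\<in>J. letter u j - letter u (?n - i + j))" by simp
  also have "\<dots> = (\<Sum>j\<in>{1..i}. letter u j - letter u (?n - i + j))"
    by (rule sum.mono_neutral_left) (auto simp: J_def)
  also have "\<dots> = (\<Sum>j<i. letter u (Suc j) - letter u (?n - i + Suc j))"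
    by (simp add: sum.atLeast1_atMost_eq)
  also have "\<dots> = Dsum u i"
    unfolding Dsum_def by (rule sum.cong) (use i in \<open>auto simp: letter_def\<close>)
  finally show ?thesis .
qed

lemma Dsum_n: "Dsum u (length u) = 0"
  by (simp add: Dsum_def)

lemma S_gf_gf: "S_gf u = gf (Sset u)"
  by (simp add: S_gf_def gf_def)

lemma one_minus_x_ne: "(1 - xvar) \<noteq> 0"
proof
  assume "1 - xvar = 0"
  then have "(1 - xvar) $ 0 $ 0 = (0::real fps fps) $ 0 $ 0" by simp
  then show False by (simp add: xvar_def)
qed

theorem theorem1:
  fixes u :: "nat list"
  assumes "pos_word u" and "inc_dec_fact u"
  defines "n \<equiv> length u"
  defines "s \<equiv> (\<lambda>i. drop i u)"
  defines "d \<equiv> (\<lambda>i. if i = n then 0 else dval i u)"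
  shows "S_gf u =
    (tvar ^ n * xvar ^ sum_list u) *
    inverse (tvar ^ n * xvar ^ sum_list u
      + (1 - xvar - tvar * xvar) *
        (\<Sum>i = 1..n. tvar ^ (n - i) * xvar ^ (d i + sum_list (s i)) * (1 - xvar) ^ (i - 1)))"
proof (cases "u = []")
  case True
  have "Sset u = {[]}" using True
    by (auto simp: Sset_def gfo_le_def embeds_at_def pos_word_def)
  then have "S_gf u = 1" by (simp add: S_gf_gf gf_nil)
  moreover have "inverse (1::real fps fps) = 1"
    by (rule fps_inverse_one') simp
  ultimately show ?thesis using True by (simp add: n_def)
next
  case False
  note pu = assms(1) and idf = assms(2)
  have n1: "1 \<le> n" using False by (cases u) (auto simp: n_def)
  define X where "X = xvar"
  define T where "T = tvar"
  define A where "A = gf (Aset u)"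
  define S where "S = gf (Sset u)"
  define L where "L = gf (domw [1])"
  define Nm where "Nm = T ^ n * X ^ sum_list u"
  define C where "C = (\<Sum>i = 1..n. T ^ (n - i) * X ^ (d i + sum_list (s i)) * (1 - X) ^ (i - 1))"
  define Q where "Q = (\<Sum>i = 1..n. T ^ (n - i) * X ^ (Dsum u i + sum_list (s i)) * (1 - X) ^ i)"
  define Den where "Den = Nm + (1 - X - T * X) * C"
  have E1: "A * L = (A - 1) + S"
  proof -
    have "A * L = gf ((\<lambda>(a,b). a @ b) ` (Aset u \<times> domw [1]))"
      unfolding A_def L_def
      by (rule gf_append[symmetric], rule inj_append_len2[where k=1]) (auto simp: domw_def)
    also have "\<dots> = gf (Aset u - {[]}) + S"
      unfolding F1_set[OF False] S_def by (rule gf_union) (use A_S_disj in auto)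
    also have "gf (Aset u - {[]}) = A - 1"
    proof -
      have "A = gf ((Aset u - {[]}) \<union> {[]})" using nil_Aset[OF False] unfolding A_def
        by (simp add: insert_absorb)
      also have "\<dots> = gf (Aset u - {[]}) + 1" by (subst gf_union) (auto simp: gf_nil)
      finally show ?thesis by simp
    qed
    finally show ?thesis .
  qed
  have a: "A * (T * X) = (A - 1 + S) * (1 - X)"
  proof -
    have "T * X = L * (1 - X)" using gf_domw1[of 1] by (simp add: L_def T_def X_def)
    then have "A * (T * X) = (A * L) * (1 - X)" by (simp add: mult.assoc)
    then show ?thesis using E1 by simp
  qed
  have E2: "A * gf (domw u) = (\<Sum>i\<in>{1..n}. X ^ Dsum u i * S * gf (domw (drop i u)))"
  proof -
    have "A * gf (domw u) = gf ((\<lambda>(a,b). a @ b) ` (Aset u \<times> domw u))"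
      unfolding A_def
      by (rule gf_append[symmetric], rule inj_append_len2[where k=n]) (auto simp: domw_def n_def)
    also have "\<dots> = gf (\<Union>i\<in>{1..n}. (\<lambda>(a,b). a @ b) ` (Tset u i \<times> domw (drop i u)))"
      unfolding F2_set[OF pu] n_def ..
    also have "\<dots> = (\<Sum>i\<in>{1..n}. gf ((\<lambda>(a,b). a @ b) ` (Tset u i \<times> domw (drop i u))))"
      by (rule gf_UN) (use F2_disj[of _ u] in \<open>auto simp: n_def\<close>)
    also have "\<dots> = (\<Sum>i\<in>{1..n}. X ^ Dsum u i * S * gf (domw (drop i u)))"
    proof (rule sum.cong)
      fix i assume i: "i \<in> {1..n}"
      have "gf ((\<lambda>(a,b). a @ b) ` (Tset u i \<times> domw (drop i u))) = gf (Tset u i) * gf (domw (drop i u))"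
        by (rule gf_append, rule inj_append_len2[where k="n - i"]) (auto simp: domw_def n_def)
      moreover have "gf (Tset u i) = X ^ Dsum u i * S"
        unfolding X_def S_def
        by (rule gf_shift[OF shift_bij[OF pu idf]]) (use i shift_sum[of i u] in \<open>auto simp: n_def\<close>)
      ultimately show "gf ((\<lambda>(a,b). a @ b) ` (Tset u i \<times> domw (drop i u))) = X ^ Dsum u i * S * gf (domw (drop i u))"
        by simp
    qed simp
    finally show ?thesis .
  qed
  have b: "A * Nm = S * Q"
  proof -
    have "A * Nm = A * gf (domw u) * (1 - X) ^ n"
      using gf_domw[of u] by (simp add: Nm_def n_def T_def X_def mult.assoc)
    also have "\<dots> = (\<Sum>i\<in>{1..n}. X ^ Dsum u i * S * gf (domw (drop i u)) * (1 - X) ^ n)"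
      by (simp add: E2 sum_distrib_right)
    also have "\<dots> = (\<Sum>i\<in>{1..n}. S * (T ^ (n - i) * X ^ (Dsum u i + sum_list (s i)) * (1 - X) ^ i))"
    proof (rule sum.cong)
      fix i assume i: "i \<in> {1..n}"
      have pw: "(1 - X) ^ n = (1 - X) ^ (n - i) * (1 - X) ^ i"
        using i by (simp flip: power_add)
      have "gf (domw (drop i u)) * (1 - X) ^ (n - i) = T ^ (n - i) * X ^ sum_list (s i)"
        using gf_domw[of "drop i u"] by (simp add: n_def s_def T_def X_def)
      then show "X ^ Dsum u i * S * gf (domw (drop i u)) * (1 - X) ^ n =
          S * (T ^ (n - i) * X ^ (Dsum u i + sum_list (s i)) * (1 - X) ^ i)"
        unfolding pw by (simp add: algebra_simps power_add)
    qed simp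
    also have "\<dots> = S * Q" by (simp add: Q_def sum_distrib_left)
    finally show ?thesis .
  qed
  have c: "(1 - X) * C = Q"
    unfolding C_def Q_def sum_distrib_left
  proof (rule sum.cong)
    fix i assume i: "i \<in> {1..n}"
    have di: "d i = Dsum u i"
      using i dval_Dsum[of i u] Dsum_n[of u] by (auto simp: d_def n_def)
    have pw: "(1 - X) * (1 - X) ^ (i - 1) = (1 - X) ^ i"
      using i by (cases i) auto
    have "(1 - X) * (T ^ (n - i) * X ^ (Dsum u i + sum_list (s i)) * (1 - X) ^ (i - 1)) =
        T ^ (n - i) * X ^ (Dsum u i + sum_list (s i)) * ((1 - X) * (1 - X) ^ (i - 1))"
      by (simp add: mult_ac)
    then show "(1 - X) * (T ^ (n - i) * X ^ (d i + sum_list (s i)) * (1 - X) ^ (i - 1)) =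
        T ^ (n - i) * X ^ (Dsum u i + sum_list (s i)) * (1 - X) ^ i"
      unfolding di pw .
  qed simp
  have main: "S * Den = Nm"
  proof -
    have "(1 - X) * (S * Den) = (1 - X) * S * Nm + (1 - X - T * X) * S * ((1 - X) * C)"
      by (simp add: Den_def algebra_simps)
    also have "\<dots> = (1 - X) * S * Nm + (1 - X - T * X) * (A * Nm)"
      by (simp add: c b)
    also have "(1 - X - T * X) * A = (1 - X) * (1 - S)"
      using a by (simp add: algebra_simps)
    then have "(1 - X - T * X) * (A * Nm) = (1 - X) * (1 - S) * Nm"
      by (simp add: mult.assoc[symmetric])
    finally have "(1 - X) * (S * Den) = (1 - X) * Nm"
      by (simp add: algebra_simps)
    then show ?thesis using one_minus_x_ne by (simp add: X_def)
  qed
  have den00: "Den $ 0 $ 0 = 1"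
  proof -
    have sp: "{1..n} = insert n {1..<n}" using n1 by auto
    have "C $ 0 $ 0 = (\<Sum>i\<in>{1..n}. (T ^ (n - i) * X ^ (d i + sum_list (s i)) * (1 - X) ^ (i - 1)) $ 0 $ 0)"
      by (simp add: C_def fps_sum_nth)
    also have "\<dots> = 1"
      unfolding sp using n1
      by (simp add: fps_power_zeroth T_def X_def tvar_def xvar_def d_def s_def n_def)
         (rule sum.neutral, auto simp: power_0_left)
    finally have "C $ 0 $ 0 = 1" .
    then show ?thesis using n1
      by (simp add: Den_def Nm_def fps_power_zeroth T_def X_def tvar_def xvar_def)
  qed
  have inv: "Den * inverse Den = 1"
  proof -
    have "Den $ 0 * inverse (Den $ 0) = 1"
      by (rule inverse_mult_eq_1') (simp add: den00)
    then have "Den * fps_right_inverse Den (inverse (Den $ 0)) = 1"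
      by (rule fps_right_inverse)
    then show ?thesis by (simp add: fps_inverse_def)
  qed
  have "S_gf u = S * (Den * inverse Den)" by (simp add: inv S_gf_gf S_def)
  also have "\<dots> = Nm * inverse Den" by (simp add: main mult.assoc[symmetric])
  finally show ?thesis
    by (simp add: Nm_def Den_def C_def T_def X_def)
qed

end
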